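(* Let $I$ be an open interval with $a=\inf I$, $S$ a nonempty set, and $V$ a subgroup of $\mathrm{Homeo}^+(I)$ that acts freely on $I$. Suppose $F:I\to S$ satisfies $F=F\circ\psi$ for some non-identity $\psi\in V$. Then for every $\varphi\in V$: if there is $t\in I$ with $F(x)=F(\varphi(x))$ for all $x\in(a,t)$, then $F=F\circ\varphi$ on all of $I$.
   Context: $\mathrm{Homeo}^+(I)$ is the group of increasing homeomorphisms of $I$; $V$ acts freely on $I$ if no non-identity element of $V$ has a fixed point in $I$. *)

theory Defs
  imports "HOL-Analysis.Analysis" "HOL-Library.Extended_Real"
begin

definition open_interval :: "ereal \<Rightarrow> ereal \<Rightarrow> real set" where
  "open_interval a b = {x. a < ereal x \<and> ereal x < b}"

text \<open>Increasing homeomorphisms of I, represented extensionally: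
  functions real to real which are the identity outside I.\<close>
definition homeo_plus :: "real set \<Rightarrow> (real \<Rightarrow> real) set" where
  "homeo_plus I = {f. (\<exists>g. homeomorphism I I f g) \<and> strict_mono_on I f
                      \<and> (\<forall>x. x \<notin> I \<longrightarrow> f x = x)}"

definition subgroup_homeo_plus :: "real set \<Rightarrow> (real \<Rightarrow> real) set \<Rightarrow> bool" where
  "subgroup_homeo_plus I V \<longleftrightarrow> V \<subseteq> homeo_plus I \<and> id \<in> V
     \<and> (\<forall>f\<in>V. \<forall>g\<in>V. f \<circ> g \<in> V) \<and> (\<forall>f\<in>V. inv f \<in> V)"

definition acts_freely :: "real set \<Rightarrow> (real \<Rightarrow> real) set \<Rightarrow> bool" where
  "acts_freely I V \<longleftrightarrow> (\<forall>f\<in>V. f \<noteq> id \<longrightarrow> (\<forall>x\<in>I. f x \<noteq> x))"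

end

theory Submission
  imports Defs
begin

lemma pow_cancel: fixes f g :: "'a \<Rightarrow> 'a" shows "f \<circ> g = id \<Longrightarrow> f ^^ n \<circ> g ^^ n = id"
proof (induction n)
  case 0 show ?case by simp
next
  case (Suc n)
  have "f ^^ Suc n \<circ> g ^^ Suc n = f ^^ n \<circ> (f \<circ> g) \<circ> g ^^ n"
    by (simp only: funpow_Suc_right[where f=f] funpow.simps(2)[where f=g] o_assoc)
  also have "\<dots> = f ^^ n \<circ> g ^^ n" by (simp only: Suc.prems o_id)
  also have "\<dots> = id" by (rule Suc.IH[OF Suc.prems])
  finally show ?case .
qed
lemma comm1: fixes f g :: "'a \<Rightarrow> 'a" shows "f \<circ> g = g \<circ> f \<Longrightarrow> f \<circ> g ^^ n = g ^^ n \<circ> f"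
proof (induction n)
  case 0 thus ?case by simp
next
  case (Suc n)
  have "f \<circ> g ^^ Suc n = (f \<circ> g) \<circ> g ^^ n" by (simp add: o_assoc)
  also have "\<dots> = g \<circ> (f \<circ> g ^^ n)" by (simp only: Suc.prems o_assoc)
  also have "\<dots> = g \<circ> g ^^ n \<circ> f" by (simp only: o_assoc[symmetric] Suc.IH[OF Suc.prems])
  finally show ?case by (simp only: funpow.simps(2) o_assoc)
qed
lemma comm2: fixes f g :: "'a \<Rightarrow> 'a" shows "f \<circ> g = g \<circ> f \<Longrightarrow> f ^^ m \<circ> g ^^ n = g ^^ n \<circ> f ^^ m"
  by (rule comm1[symmetric]) (rule comm1[symmetric])

locale fa =
  fixes a b :: ereal and V :: "(real \<Rightarrow> real) set"
  assumes ab: "a < b" and sg: "subgroup_homeo_plus (open_interval a b) V"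
    and fr: "acts_freely (open_interval a b) V"
begin

abbreviation J where "J \<equiv> open_interval a b"

lemma V_h: "f \<in> V \<Longrightarrow> f \<in> homeo_plus J" using sg unfolding subgroup_homeo_plus_def by blast
lemma V_comp: "f \<in> V \<Longrightarrow> g \<in> V \<Longrightarrow> f \<circ> g \<in> V" using sg unfolding subgroup_homeo_plus_def by blast
lemma V_inv: "f \<in> V \<Longrightarrow> inv f \<in> V" using sg unfolding subgroup_homeo_plus_def by blast
lemma V_id: "id \<in> V" using sg unfolding subgroup_homeo_plus_def by blast
lemma V_pow: "f \<in> V \<Longrightarrow> f ^^ n \<in> V"
  by (induction n) (auto simp: V_id V_comp)

lemma V_maps: "f \<in> V \<Longrightarrow> x \<in> J \<Longrightarrow> f x \<in> J"
  using V_h[of f] unfolding homeo_plus_def homeomorphism_def by blast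
lemma V_onto: "f \<in> V \<Longrightarrow> y \<in> J \<Longrightarrow> \<exists>x\<in>J. f x = y"
  using V_h[of f] unfolding homeo_plus_def homeomorphism_def by blast
lemma V_out: "f \<in> V \<Longrightarrow> x \<notin> J \<Longrightarrow> f x = x"
  using V_h[of f] unfolding homeo_plus_def by blast
lemma V_cont: "f \<in> V \<Longrightarrow> continuous_on J f"
  using V_h[of f] unfolding homeo_plus_def homeomorphism_def by blast
lemma V_smono: "f \<in> V \<Longrightarrow> x \<in> J \<Longrightarrow> y \<in> J \<Longrightarrow> x < y \<Longrightarrow> f x < f y"
  using V_h[of f] unfolding homeo_plus_def by (auto dest: strict_mono_onD)
lemma V_mono: "f \<in> V \<Longrightarrow> x \<in> J \<Longrightarrow> y \<in> J \<Longrightarrow> x \<le> y \<Longrightarrow> f x \<le> f y"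
  using V_smono[of f x y] by (cases "x = y") auto
lemma V_smono_iff: "f \<in> V \<Longrightarrow> x \<in> J \<Longrightarrow> y \<in> J \<Longrightarrow> f x < f y \<longleftrightarrow> x < y"
  using V_smono[of f x y] V_mono[of f y x] by (auto simp: not_less[symmetric])

lemma V_bij: assumes "f \<in> V" shows "bij f"
proof (rule bijI)
  show "inj f"
  proof (rule injI)
    fix x y assume e: "f x = f y"
    show "x = y"
    proof (cases "x \<in> J"; cases "y \<in> J")
      assume "x \<in> J" "y \<in> J" thus ?thesis using e V_smono[OF assms, of x y] V_smono[OF assms, of y x]
        by (metis less_irrefl linorder_neqE)
    next
      assume "x \<in> J" "y \<notin> J" thus ?thesis using e V_maps[OF assms] V_out[OF assms] by metis
    next
      assume "x \<notin> J" "y \<in> J" thus ?thesis using e V_maps[OF assms] V_out[OF assms] by metis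
    next
      assume "x \<notin> J" "y \<notin> J" thus ?thesis using e V_out[OF assms] by metis
    qed
  qed
  show "surj f"
  proof -
    have "y \<in> range f" for y
      using V_onto[OF assms, of y] V_out[OF assms, of y] by (cases "y \<in> J") (metis rangeI)+
    thus ?thesis by blast
  qed
qed

lemma inv_l: "f \<in> V \<Longrightarrow> inv f (f x) = x" using V_bij bij_is_inj inv_f_f by metis
lemma inv_r: "f \<in> V \<Longrightarrow> f (inv f x) = x" using V_bij bij_is_surj surj_f_inv_f by metis
lemma inv_lo: "f \<in> V \<Longrightarrow> inv f \<circ> f = id" using inv_l by auto
lemma inv_ro: "f \<in> V \<Longrightarrow> f \<circ> inv f = id" using inv_r by auto

lemma J_ex: "\<exists>x. x \<in> J" using ereal_dense2[OF ab] unfolding open_interval_def by auto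

lemma J_between: "x \<in> J \<Longrightarrow> z \<in> J \<Longrightarrow> x \<le> y \<Longrightarrow> y \<le> z \<Longrightarrow> y \<in> J"
proof -
  assume h: "x \<in> J" "z \<in> J" "x \<le> y" "y \<le> z"
  have "ereal x \<le> ereal y" "ereal y \<le> ereal z" using h by auto
  moreover have "a < ereal x" "ereal z < b" using h unfolding open_interval_def by auto
  ultimately have "a < ereal y" "ereal y < b" using less_le_trans le_less_trans by blast+
  thus "y \<in> J" unfolding open_interval_def by auto
qed

lemma free: "f \<in> V \<Longrightarrow> f \<noteq> id \<Longrightarrow> x \<in> J \<Longrightarrow> f x \<noteq> x"
  using fr unfolding acts_freely_def by blast

lemma sign: assumes f: "f \<in> V" "f \<noteq> id"
  shows "(\<forall>x\<in>J. x < f x) \<or> (\<forall>x\<in>J. f x < x)"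
proof (rule ccontr)
  assume "\<not> ?thesis"
  then obtain x y where x0: "x \<in> J" "\<not> x < f x" and y0: "y \<in> J" "\<not> f y < y" by blast
  have x: "x \<in> J" "f x \<le> x" using x0 by simp_all
  have y: "y \<in> J" "y \<le> f y" using y0 by simp_all
  have cont: "continuous_on {u..v} (\<lambda>z. f z - z)" if "u \<in> J" "v \<in> J" for u v
  proof -
    have sub: "{u..v} \<subseteq> J"
    proof
      fix w assume "w \<in> {u..v}" thus "w \<in> J" using J_between[OF that] by simp
    qed
    show ?thesis by (rule continuous_on_diff[OF continuous_on_subset[OF V_cont[OF f(1)] sub] continuous_on_id])
  qed
  have "\<exists>z. z \<in> J \<and> f z - z = 0"
  proof (cases "x \<le> y")
    case True
    have "\<exists>z. x \<le> z \<and> z \<le> y \<and> f z - z = 0"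
      by (rule IVT'[of "\<lambda>z. f z - z" x 0 y, OF _ _ True cont[OF x(1) y(1)]]) (use x y in auto)
    then obtain z where "x \<le> z" "z \<le> y" "f z - z = 0" by blast
    thus ?thesis using J_between[OF x(1) y(1)] by blast
  next
    case False
    hence F: "y \<le> x" by simp
    have "\<exists>z. y \<le> z \<and> z \<le> x \<and> f z - z = 0"
      by (rule IVT2'[of "\<lambda>z. f z - z" x 0 y, OF _ _ F cont[OF y(1) x(1)]]) (use x y in auto)
    then obtain z where "y \<le> z" "z \<le> x" "f z - z = 0" by blast
    thus ?thesis using J_between[OF y(1) x(1)] by blast
  qed
  then obtain z where "z \<in> J" "f z - z = 0" by blast
  thus False using free[OF f(1) f(2), of z] by simp
qed

lemma V_eqI: "f \<in> V \<Longrightarrow> g \<in> V \<Longrightarrow> (\<And>x. x \<in> J \<Longrightarrow> f x = g x) \<Longrightarrow> f = g"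
  by (rule ext) (metis V_out)

definition lt :: "(real \<Rightarrow> real) \<Rightarrow> (real \<Rightarrow> real) \<Rightarrow> bool" where "lt f g \<longleftrightarrow> (\<forall>x\<in>J. f x < g x)"
definition le :: "(real \<Rightarrow> real) \<Rightarrow> (real \<Rightarrow> real) \<Rightarrow> bool" where "le f g \<longleftrightarrow> (\<forall>x\<in>J. f x \<le> g x)"

lemma trich: assumes "f \<in> V" "g \<in> V" shows "f = g \<or> lt f g \<or> lt g f"
proof -
  let ?h = "inv g \<circ> f"
  have h: "?h \<in> V" using assms V_comp V_inv by blast
  have eq: "g (?h x) = f x" for x using inv_r[OF assms(2)] by simp
  show ?thesis
  proof (cases "?h = id")
    case True
    have "f x = g x" for x using eq[of x] True by simp
    hence "f = g" by (intro ext)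
    thus ?thesis by (rule disjI1)
  next
    case False
    note s = sign[OF h False]
    show ?thesis using s
    proof
      assume A: "\<forall>x\<in>J. x < ?h x"
      have "g x < f x" if "x \<in> J" for x
        using V_smono[OF assms(2) that V_maps[OF h that] A[rule_format, OF that]] eq[of x] by simp
      thus ?thesis unfolding lt_def by blast
    next
      assume A: "\<forall>x\<in>J. ?h x < x"
      have "f x < g x" if "x \<in> J" for x
        using V_smono[OF assms(2) V_maps[OF h that] that A[rule_format, OF that]] eq[of x] by simp
      thus ?thesis unfolding lt_def by blast
    qed
  qed
qed


lemma lt_le: "lt f g \<Longrightarrow> le f g" unfolding lt_def le_def by (simp add: less_imp_le)
lemma le_refl': "le f f" unfolding le_def by simp
lemma le_trans': "le f g \<Longrightarrow> le g h \<Longrightarrow> le f h" unfolding le_def by (meson order_trans)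
lemma lt_le_trans: "lt f g \<Longrightarrow> le g h \<Longrightarrow> lt f h" unfolding le_def lt_def by (meson less_le_trans)
lemma le_lt_trans: "le f g \<Longrightarrow> lt g h \<Longrightarrow> lt f h" unfolding le_def lt_def by (meson le_less_trans)
lemma lt_le_contra: "lt f g \<Longrightarrow> le g f \<Longrightarrow> False"
proof -
  assume "lt f g" "le g f"
  moreover obtain x where "x \<in> J" using J_ex by blast
  ultimately show False unfolding le_def lt_def by (meson not_le)
qed
lemma lt_compL: "h \<in> V \<Longrightarrow> f \<in> V \<Longrightarrow> g \<in> V \<Longrightarrow> lt f g \<Longrightarrow> lt (h \<circ> f) (h \<circ> g)"
  unfolding lt_def by (simp add: V_smono V_maps)
lemma le_compL: "h \<in> V \<Longrightarrow> f \<in> V \<Longrightarrow> g \<in> V \<Longrightarrow> le f g \<Longrightarrow> le (h \<circ> f) (h \<circ> g)"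
  unfolding le_def by (simp add: V_mono V_maps)
lemma lt_compR: "h \<in> V \<Longrightarrow> lt f g \<Longrightarrow> lt (f \<circ> h) (g \<circ> h)"
  unfolding lt_def by (simp add: V_maps)
lemma le_compR: "h \<in> V \<Longrightarrow> le f g \<Longrightarrow> le (f \<circ> h) (g \<circ> h)"
  unfolding le_def by (simp add: V_maps)
lemma le_inv: assumes "f \<in> V" "g \<in> V" "le f g" shows "le (inv g) (inv f)"
  unfolding le_def
proof
  fix x assume x: "x \<in> J"
  let ?u = "inv f x"
  have u: "?u \<in> J" using V_maps[OF V_inv[OF assms(1)] x] .
  have fu: "f ?u = x" using inv_r[OF assms(1)] .
  have "x \<le> g ?u" using assms(3) u fu unfolding le_def by metis
  hence "inv g x \<le> inv g (g ?u)" using V_mono[OF V_inv[OF assms(2)] x V_maps[OF assms(2) u]] by blast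
  thus "inv g x \<le> inv f x" using inv_l[OF assms(2)] by simp
qed
lemma not_lt_le: "f \<in> V \<Longrightarrow> g \<in> V \<Longrightarrow> \<not> lt f g \<Longrightarrow> le g f"
  using trich[of f g] lt_le le_refl' by blast

lemma pow_in: "f \<in> V \<Longrightarrow> x \<in> J \<Longrightarrow> (f ^^ n) x \<in> J"
  using V_maps[OF V_pow] by blast

lemma arch_pt: assumes e: "e \<in> V" "\<forall>x\<in>J. x < e x" and y: "y \<in> J" and z: "z \<in> J"
  shows "\<exists>n. z < (e ^^ n) y"
proof (rule ccontr)
  assume "\<not> ?thesis"
  hence bd: "\<And>n. (e ^^ n) y \<le> z" by (simp add: not_less)
  define s where "s n = (e ^^ n) y" for n
  have sJ: "s n \<in> J" for n unfolding s_def using pow_in[OF e(1) y] .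
  have sS: "s (Suc n) = e (s n)" for n unfolding s_def by simp
  have inc: "incseq s"
    by (rule incseq_SucI) (use sS sJ e(2) in \<open>simp add: less_imp_le\<close>)
  have bda: "bdd_above (range s)" using bd unfolding s_def by (intro bdd_aboveI) auto
  define L where "L = (SUP n. s n)"
  have lim: "s \<longlonglongrightarrow> L" unfolding L_def by (rule LIMSEQ_incseq_SUP[OF bda inc])
  have "s 0 \<le> L" by (rule incseq_le[OF inc lim])
  hence yL: "y \<le> L" unfolding s_def by simp
  have Lz: "L \<le> z" by (rule LIMSEQ_le_const2[OF lim]) (use bd s_def in auto)
  have LJ: "L \<in> J" by (rule J_between[OF y z yL Lz])
  have "(\<lambda>n. e (s n)) \<longlonglongrightarrow> e L"
    using V_cont[OF e(1)] LJ sJ lim unfolding continuous_on_sequentially comp_def by blast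
  moreover have "(\<lambda>n. e (s n)) \<longlonglongrightarrow> L" unfolding sS[symmetric] by (rule LIMSEQ_Suc[OF lim])
  ultimately have "e L = L" by (rule LIMSEQ_unique)
  thus False using e(2) LJ by force
qed

lemma arch: assumes e: "e \<in> V" "lt id e" and g: "g \<in> V" shows "\<exists>n. lt g (e ^^ n)"
proof -
  obtain x where x: "x \<in> J" using J_ex by blast
  have "\<forall>x\<in>J. x < e x" using e(2) unfolding lt_def by simp
  then obtain n where n: "g x < (e ^^ n) x" using arch_pt[OF e(1) _ x V_maps[OF g x]] by blast
  have "\<not> lt (e ^^ n) g" using n x unfolding lt_def by force
  moreover have "g \<noteq> e ^^ n" using n by force
  ultimately show ?thesis using trich[OF g V_pow[OF e(1)]] by blast
qed

lemma arch_neg: assumes e: "e \<in> V" "lt id e" and g: "g \<in> V" shows "\<exists>n. lt ((inv e) ^^ n) g"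
proof -
  obtain n where n: "lt (inv g) (e ^^ n)" using arch[OF e V_inv[OF g]] by blast
  let ?q = "inv e ^^ n"
  have q: "?q \<in> V" using V_pow[OF V_inv[OF e(1)]] .
  have qe: "?q \<circ> e ^^ n = id" using pow_cancel[OF inv_lo[OF e(1)]] .
  have "lt (?q \<circ> inv g) (?q \<circ> e ^^ n)" by (rule lt_compL[OF q V_inv[OF g] V_pow[OF e(1)] n])
  hence "lt (?q \<circ> inv g \<circ> g) (id \<circ> g)" using lt_compR[OF g] qe by metis
  hence "lt (?q \<circ> (inv g \<circ> g)) g" by (simp only: o_assoc id_o)
  hence "lt ?q g" by (simp only: inv_lo[OF g] o_id)
  thus ?thesis by blast
qed

definition P where "P d = {A. \<exists>n. A = d ^^ n \<or> A = inv d ^^ n}"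

lemma P_V: "d \<in> V \<Longrightarrow> A \<in> P d \<Longrightarrow> A \<in> V"
  unfolding P_def using V_pow V_inv by blast
lemma P_d: "d \<in> P d" unfolding P_def by (rule CollectI, rule exI[of _ 1]) simp
lemma P_comm: assumes d: "d \<in> V" and A: "A \<in> P d" and B: "B \<in> P d" shows "A \<circ> B = B \<circ> A"
proof -
  have c1: "d \<circ> inv d = inv d \<circ> d" using inv_lo[OF d] inv_ro[OF d] by simp
  have c0: "d \<circ> d = d \<circ> d" "inv d \<circ> inv d = inv d \<circ> inv d" by simp_all
  show ?thesis using A B unfolding P_def
    using comm2[OF c1] comm2[OF c1[symmetric]] comm2[OF c0(1)] comm2[OF c0(2)] by auto
qed

lemma bracket: assumes d: "d \<in> V" "lt id d" and f: "f \<in> V"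
  shows "\<exists>A\<in>P d. le A f \<and> lt f (A \<circ> d)"
proof (cases "lt f id")
  case False
  obtain n where n: "lt f (d ^^ n)" using arch[OF d f] by blast
  have "lt f (d ^^ n) \<longrightarrow> (\<exists>m. le (d ^^ m) f \<and> lt f (d ^^ Suc m))" for n
  proof (induction n)
    case 0 have "d ^^ 0 = id" by (rule funpow.simps(1))
    thus ?case using False by metis
  next
    case (Suc n)
    show ?case
    proof (cases "lt f (d ^^ n)")
      case True thus ?thesis using Suc.IH by blast
    next
      case F: False
      show ?thesis using not_lt_le[OF f V_pow[OF d(1)] F] by blast
    qed
  qed
  then obtain m where "le (d ^^ m) f" "lt f (d ^^ Suc m)" using n by blast
  moreover have "d ^^ m \<in> P d" unfolding P_def by blast
  moreover have "d ^^ Suc m = d ^^ m \<circ> d" by (rule funpow_Suc_right)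
  ultimately show ?thesis by metis
next
  case True
  let ?q = "inv d"
  have q: "?q \<in> V" using V_inv[OF d(1)] .
  have qd: "(?q ^^ n \<circ> d) x = (?q ^^ Suc n \<circ> d \<circ> d) x" for n x
    by (simp only: funpow_Suc_right comp_apply inv_l[OF d(1)])
  have qdP: "?q ^^ n \<in> P d" for n unfolding P_def by blast
  have idd: "lt (A \<circ> id) (A \<circ> d)" if "A \<in> V" for A using lt_compL[OF that V_id d(1) d(2)] .
  obtain n where n: "lt (?q ^^ n) f" using arch_neg[OF d f] by blast
  have "lt (?q ^^ n) f \<longrightarrow> (\<exists>A\<in>P d. le A f \<and> lt f (A \<circ> d))" for n
  proof (induction n)
    case 0 have "?q ^^ 0 = id" by (rule funpow.simps(1))
    thus ?case using True lt_le_contra lt_le by metis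
  next
    case (Suc n)
    show ?case
    proof (cases "lt (?q ^^ n) f")
      case T: True thus ?thesis using Suc.IH by blast
    next
      case F: False
      show ?thesis
      proof (intro impI)
        assume lt1: "lt (?q ^^ Suc n) f"
        have fq: "f = ?q ^^ n \<or> lt f (?q ^^ n)" using trich[OF f V_pow[OF q]] F by blast
        thus "\<exists>A\<in>P d. le A f \<and> lt f (A \<circ> d)"
        proof
          assume "f = ?q ^^ n"
          thus ?thesis using idd[OF V_pow[OF q], of n] qdP[of n] le_refl' by auto
        next
          assume l: "lt f (?q ^^ n)"
          have "?q ^^ n = ?q ^^ Suc n \<circ> d" proof (rule ext) fix x show "(?q ^^ n) x = (?q ^^ Suc n \<circ> d) x"
            by (simp only: funpow_Suc_right comp_apply inv_l[OF d(1)]) qed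
          thus ?thesis using l lt1 lt_le qdP[of "Suc n"] by metis
        qed
      qed
    qed
  qed
  thus ?thesis using n by blast
qed


lemma hold_pos: assumes f: "f \<in> V" and g: "g \<in> V"
  and c: "lt id (inv (f \<circ> g) \<circ> (g \<circ> f))" shows False
proof -
  define c where "c = inv (f \<circ> g) \<circ> (g \<circ> f)"
  have fg: "f \<circ> g \<in> V" "g \<circ> f \<in> V" using f g V_comp by auto
  have cV: "c \<in> V" unfolding c_def using fg V_inv V_comp by blast
  have cpos: "lt id c" using c unfolding c_def .
  show False
  proof (cases "\<exists>e\<in>V. lt id e \<and> lt e c")
    case True
    then obtain e where e: "e \<in> V" "lt id e" "lt e c" by blast
    have "\<exists>d\<in>V. lt id d \<and> le (d \<circ> d) c"
    proof (cases "le (e \<circ> e) c")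
      case True thus ?thesis using e by blast
    next
      case False
      have ee: "e \<circ> e \<in> V" using V_comp e by blast
      have lce: "lt c (e \<circ> e)" using trich[OF cV ee] False le_refl' lt_le by blast
      define d where "d = inv e \<circ> c"
      have dV: "d \<in> V" unfolding d_def using V_inv V_comp e cV by blast
      have ie: "inv e \<in> V" using V_inv e by blast
      have "lt (inv e \<circ> e) d" unfolding d_def by (rule lt_compL[OF ie e(1) cV e(3)])
      hence dpos: "lt id d" by (simp only: inv_lo[OF e(1)])
      have "lt d (inv e \<circ> (e \<circ> e))" unfolding d_def by (rule lt_compL[OF ie cV ee lce])
      hence de: "lt d e" by (simp only: o_assoc inv_lo[OF e(1)] id_o)
      have "lt (d \<circ> d) (e \<circ> d)" by (rule lt_compR[OF dV de])
      moreover have "e \<circ> d = c" unfolding d_def by (simp only: o_assoc inv_ro[OF e(1)] id_o)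
      ultimately show ?thesis using dV dpos lt_le by metis
    qed
    then obtain d where d: "d \<in> V" "lt id d" "le (d \<circ> d) c" by blast
    obtain A where A: "A \<in> P d" "le A f" "lt f (A \<circ> d)" using bracket[OF d(1,2) f] by blast
    obtain B where B: "B \<in> P d" "le B g" "lt g (B \<circ> d)" using bracket[OF d(1,2) g] by blast
    have AV: "A \<in> V" and BV: "B \<in> V" using P_V d A B by auto
    have AB: "A \<circ> B \<in> V" using V_comp AV BV by blast
    have Bd: "B \<circ> d \<in> V" "A \<circ> d \<in> V" using V_comp AV BV d by auto
    have dA: "d \<circ> A = A \<circ> d" by (rule P_comm[OF d(1) P_d A(1)])
    have BA: "B \<circ> A = A \<circ> B" by (rule P_comm[OF d(1) B(1) A(1)])
    have l1: "le (A \<circ> B) (f \<circ> g)"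
      by (rule le_trans'[OF le_compL[OF AV BV g B(2)] le_compR[OF g A(2)]])
    have l2: "lt (g \<circ> f) ((B \<circ> d) \<circ> (A \<circ> d))"
      by (rule lt_le_trans[OF lt_compR[OF f B(3)] le_compL[OF Bd(1) f Bd(2) lt_le[OF A(3)]]])
    have eq: "(B \<circ> d) \<circ> (A \<circ> d) = (A \<circ> B) \<circ> (d \<circ> d)"
    proof -
      have "(B \<circ> d) \<circ> (A \<circ> d) = B \<circ> (d \<circ> A) \<circ> d" by (simp only: o_assoc)
      also have "\<dots> = (B \<circ> A) \<circ> (d \<circ> d)" by (simp only: dA o_assoc)
      also have "\<dots> = (A \<circ> B) \<circ> (d \<circ> d)" by (simp only: BA)
      finally show ?thesis .
    qed
    have dd: "d \<circ> d \<in> V" using V_comp d by blast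
    have X: "A \<circ> B \<circ> (d \<circ> d) \<in> V" using V_comp AB dd by blast
    have ifg: "inv (f \<circ> g) \<in> V" using V_inv fg by blast
    have "lt c (inv (f \<circ> g) \<circ> (A \<circ> B \<circ> (d \<circ> d)))"
      unfolding c_def by (rule lt_compL[OF ifg fg(2) X]) (use l2 eq in simp)
    moreover have "le (inv (f \<circ> g) \<circ> (A \<circ> B \<circ> (d \<circ> d))) (inv (A \<circ> B) \<circ> (A \<circ> B \<circ> (d \<circ> d)))"
      by (rule le_compR[OF X le_inv[OF AB fg(1) l1]])
    moreover have "inv (A \<circ> B) \<circ> (A \<circ> B \<circ> (d \<circ> d)) = d \<circ> d"
    proof -
      have "inv (A \<circ> B) \<circ> (A \<circ> B \<circ> (d \<circ> d)) = (inv (A \<circ> B) \<circ> (A \<circ> B)) \<circ> (d \<circ> d)"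
        by (simp only: o_assoc)
      thus ?thesis by (simp only: inv_lo[OF AB] id_o)
    qed
    ultimately have "lt c (d \<circ> d)" using lt_le_trans by metis
    thus False using d(3) lt_le_contra by blast
  next
    case False
    have isP: "h \<in> P c" if h: "h \<in> V" for h
    proof -
      obtain A where A: "A \<in> P c" "le A h" "lt h (A \<circ> c)" using bracket[OF cV cpos h] by blast
      have AV: "A \<in> V" using P_V cV A by blast
      have iA: "inv A \<in> V" using V_inv AV by blast
      define k where "k = inv A \<circ> h"
      have kV: "k \<in> V" unfolding k_def using V_comp iA h by blast
      have "le (inv A \<circ> A) k" unfolding k_def by (rule le_compL[OF iA AV h A(2)])
      hence k1: "le id k" by (simp only: inv_lo[OF AV])
      have "lt k (inv A \<circ> (A \<circ> c))" unfolding k_def by (rule lt_compL[OF iA h V_comp[OF AV cV] A(3)])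
      hence k2: "lt k c" by (simp only: o_assoc inv_lo[OF AV] id_o)
      have "k = id" using trich[OF kV V_id] False kV k1 k2 lt_le_contra by blast
      hence "A \<circ> k = A" by simp
      moreover have "A \<circ> k = h" unfolding k_def by (simp only: o_assoc inv_ro[OF AV] id_o)
      ultimately show ?thesis using A(1) by simp
    qed
    have "f \<circ> g = g \<circ> f" by (rule P_comm[OF cV isP[OF f] isP[OF g]])
    hence "c = id" unfolding c_def by (simp only: inv_lo[OF fg(2)])
    thus False using cpos lt_le_contra le_refl' by metis
  qed
qed

lemma holder: assumes f: "f \<in> V" and g: "g \<in> V" shows "f \<circ> g = g \<circ> f"
proof (rule ccontr)
  assume ne: "f \<circ> g \<noteq> g \<circ> f"
  have fg: "f \<circ> g \<in> V" "g \<circ> f \<in> V" using f g V_comp by auto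
  define c where "c = inv (f \<circ> g) \<circ> (g \<circ> f)"
  have cV: "c \<in> V" unfolding c_def using fg V_inv V_comp by blast
  have "c \<noteq> id"
  proof
    assume "c = id"
    hence "(f \<circ> g) \<circ> c = f \<circ> g" by simp
    moreover have "(f \<circ> g) \<circ> c = g \<circ> f" unfolding c_def by (simp only: o_assoc inv_ro[OF fg(1)] id_o)
    ultimately show False using ne by simp
  qed
  hence "lt id c \<or> lt c id" using trich[OF cV V_id] by blast
  thus False
  proof
    assume "lt id c" thus False using hold_pos[OF f g] unfolding c_def by blast
  next
    assume lc: "lt c id"
    have "lt id (inv (g \<circ> f) \<circ> (f \<circ> g))" unfolding lt_def
    proof
      fix x assume x: "x \<in> J"
      define y where "y = inv (g \<circ> f) ((f \<circ> g) x)"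
      have yJ: "y \<in> J" unfolding y_def using V_maps V_inv fg x by blast
      have gy: "(g \<circ> f) y = (f \<circ> g) x" unfolding y_def by (rule inv_r[OF fg(2)])
      have "c y < y" using lc yJ unfolding lt_def by simp
      moreover have "c y = x" unfolding c_def using gy inv_l[OF fg(1)] by simp
      ultimately show "id x < (inv (g \<circ> f) \<circ> (f \<circ> g)) x" unfolding y_def by simp
    qed
    thus False using hold_pos[OF g f] by blast
  qed
qed

end

theorem lemma3p2:
  fixes a b :: ereal and S :: "'s set" and V :: "(real \<Rightarrow> real) set"
    and F :: "real \<Rightarrow> 's" and \<psi> \<phi> :: "real \<Rightarrow> real" and t :: real
  assumes "a < b"
    and "S \<noteq> {}"
    and "subgroup_homeo_plus (open_interval a b) V"
    and "acts_freely (open_interval a b) V"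
    and "\<forall>x\<in>open_interval a b. F x \<in> S"
    and "\<psi> \<in> V" and "\<psi> \<noteq> id"
    and "\<forall>x\<in>open_interval a b. F x = F (\<psi> x)"
    and "\<phi> \<in> V"
    and "t \<in> open_interval a b"
    and "\<forall>x. a < ereal x \<and> x < t \<longrightarrow> F x = F (\<phi> x)"
  shows "\<forall>x\<in>open_interval a b. F x = F (\<phi> x)"
proof -
  interpret fa a b V using assms(1,3,4) by unfold_locales
  note psi = assms(6,7) and Fpsi = assms(8) and phi = assms(9) and t = assms(10) and Ft = assms(11)
  have "\<exists>e\<in>V. (\<forall>x\<in>J. x < e x) \<and> (\<forall>x\<in>J. F (e x) = F x)"
  proof (cases "\<forall>x\<in>J. x < \<psi> x")
    case True thus ?thesis using psi Fpsi by metis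
  next
    case False
    hence neg: "\<forall>x\<in>J. \<psi> x < x" using sign[OF psi] by blast
    have ip: "inv \<psi> \<in> V" using V_inv psi by blast
    have "x < inv \<psi> x" if x: "x \<in> J" for x
      using neg[rule_format, OF V_maps[OF ip x]] inv_r[OF psi(1)] by simp
    moreover have "F (inv \<psi> x) = F x" if x: "x \<in> J" for x
      using Fpsi[rule_format, OF V_maps[OF ip x]] inv_r[OF psi(1)] by simp
    ultimately show ?thesis using ip by blast
  qed
  then obtain e where e: "e \<in> V" "\<forall>x\<in>J. x < e x" "\<forall>x\<in>J. F (e x) = F x" by blast
  define q where "q = inv e"
  have qV: "q \<in> V" unfolding q_def using V_inv e by blast
  have Fq: "F (q x) = F x" if x: "x \<in> J" for x
    using e(3)[rule_format, OF V_maps[OF qV x]] inv_r[OF e(1)] unfolding q_def by simp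
  have Fqn: "F ((q ^^ n) x) = F x" if x: "x \<in> J" for x n
  proof (induction n)
    case 0 show ?case by simp
  next
    case (Suc n) show ?case using Fq[OF pow_in[OF qV x, of n]] Suc by simp
  qed
  have eq: "e ^^ n \<circ> q ^^ n = id" for n unfolding q_def by (rule pow_cancel[OF inv_ro[OF e(1)]])
  have cq: "\<phi> \<circ> q ^^ n = q ^^ n \<circ> \<phi>" for n by (rule comm1[OF holder[OF phi qV]])
  show ?thesis
  proof
    fix x assume x: "x \<in> J"
    obtain n where n: "x < (e ^^ n) t" using arch_pt[OF e(1,2) t x] by blast
    define u where "u = (q ^^ n) x"
    have uJ: "u \<in> J" unfolding u_def using pow_in[OF qV x] .
    have "u < t"
    proof (rule ccontr)
      assume "\<not> u < t"
      hence "(e ^^ n) t \<le> (e ^^ n) u" using V_mono[OF V_pow[OF e(1)] t uJ] by simp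
      moreover have "(e ^^ n) u = x" unfolding u_def using fun_cong[OF eq[of n], of x] by simp
      ultimately show False using n by simp
    qed
    moreover have "a < ereal u" using uJ unfolding open_interval_def by simp
    ultimately have Fu: "F u = F (\<phi> u)" using Ft by blast
    have "F (\<phi> x) = F ((q ^^ n) (\<phi> x))" using Fqn[OF V_maps[OF phi x]] by simp
    also have "\<dots> = F (\<phi> u)" unfolding u_def using fun_cong[OF cq[of n], of x] by simp
    also have "\<dots> = F u" using Fu by simp
    also have "\<dots> = F x" unfolding u_def by (rule Fqn[OF x])
    finally show "F x = F (\<phi> x)" by simp
  qed
qed

end
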